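(* Under the standing assumptions, let $\vec v$ be a demand vector with at least four non-zero entries, and let $t$ be a task of type 2 with respect to $\vec v$ with intermediate task $i$. Then task $i$ is of type 1 with respect to $\vec v$.
   Context: Standing assumptions: $n\ge 4$, $k\ge 5$, and $f_1,\dots,f_n$ are functions from demand vectors to $[k]$ satisfying the demand (for every demand vector $\vec v$ and task $j$, exactly $v_j$ agents $a$ have $f_a(\vec v)=j$), with maximum switching cost at most $2$. A demand vector is $\vec v=(v_1,\dots,v_k)$ of non-negative integers with $\sum v_j=n$; task $j$ is non-empty in $\vec v$ if $v_j\ge1$. The switching cost of $(\vec v,\vec v')$ is the number of agents $a$ with $f_a(\vec v)\ne f_a(\vec v')$; $\vec v,\vec v'$ are adjacent if $\|\vec v-\vec v'\|_1=2$. An ordered pair $(\vec v_1,\vec v_2)$ is $(s,t)$-adjacent if $s\ne t$ and $\vec v_2$ is obtained from $\vec v_1$ by moving one unit of demand from task $s$ to task $t$. Agent $a$ is $(i,j)$-mobile with respect to $(\vec v_1,\vec v_2)$ if $f_a(\vec v_1)=i$, $f_a(\vec v_2)=j$, $i\ne j$. If $(\vec v_1,\vec v_2)$ is $(s,t)$-adjacent with switching cost $2$, then there is a task $i\notin\{s,t\}$ such that one switching agent is $(s,i)$-mobile and the other is $(i,t)$-mobile; $i$ is called the intermediate task of $(\vec v_1,\vec v_2)$. A task $t$ is of type 1 with respect to $\vec v$ if for every task $s\ne t$ non-empty in $\vec v$, the $(s,t)$-adjacent pair starting at $\vec v$ has switching cost $1$. A task $t$ is of type 2 with respect to $\vec v$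 if there exist a task $i$ and an agent $a$ such that for every task $s\notin\{i,t\}$ non-empty in $\vec v$, the $(s,t)$-adjacent pair starting at $\vec v$ has switching cost $2$, intermediate task $i$, and $(i,t)$-mobile agent $a$; then $i$ is the intermediate task of $t$ with respect to $\vec v$. *)

theory Defs
  imports Main
begin

(* Agents are 0..<n, tasks are 0..<k. A demand vector is v :: nat => nat with
   v j = 0 for j >= k and sum_{j<k} v j = n. Agent a's assignment is f a v. *)

definition demand_vec :: "nat \<Rightarrow> nat \<Rightarrow> (nat \<Rightarrow> nat) \<Rightarrow> bool" where
  "demand_vec n k v \<longleftrightarrow> (\<forall>j\<ge>k. v j = 0) \<and> (\<Sum>j<k. v j) = n"

definition satisfies_demand :: "nat \<Rightarrow> nat \<Rightarrow> (nat \<Rightarrow> (nat \<Rightarrow> nat) \<Rightarrow> nat) \<Rightarrow> bool" where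
  "satisfies_demand n k f \<longleftrightarrow> (\<forall>v. demand_vec n k v \<longrightarrow>
      (\<forall>a<n. f a v < k) \<and> (\<forall>j<k. card {a. a < n \<and> f a v = j} = v j))"

definition switching_cost :: "nat \<Rightarrow> (nat \<Rightarrow> (nat \<Rightarrow> nat) \<Rightarrow> nat) \<Rightarrow> (nat \<Rightarrow> nat) \<Rightarrow> (nat \<Rightarrow> nat) \<Rightarrow> nat" where
  "switching_cost n f v v' = card {a. a < n \<and> f a v \<noteq> f a v'}"

definition adjacent :: "nat \<Rightarrow> (nat \<Rightarrow> nat) \<Rightarrow> (nat \<Rightarrow> nat) \<Rightarrow> bool" where
  "adjacent k v v' \<longleftrightarrow> (\<Sum>j<k. \<bar>int (v j) - int (v' j)\<bar>) = 2"

definition max_switching_cost_le :: "nat \<Rightarrow> nat \<Rightarrow> (nat \<Rightarrow> (nat \<Rightarrow> nat) \<Rightarrow> nat) \<Rightarrow> nat \<Rightarrow> bool" where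
  "max_switching_cost_le n k f c \<longleftrightarrow> (\<forall>v v'. demand_vec n k v \<longrightarrow> demand_vec n k v' \<longrightarrow>
      adjacent k v v' \<longrightarrow> switching_cost n f v v' \<le> c)"

definition move :: "(nat \<Rightarrow> nat) \<Rightarrow> nat \<Rightarrow> nat \<Rightarrow> (nat \<Rightarrow> nat)" where
  "move v s t = (v(s := v s - 1)) (t := v t + 1)"

definition mobile :: "(nat \<Rightarrow> (nat \<Rightarrow> nat) \<Rightarrow> nat) \<Rightarrow> nat \<Rightarrow> nat \<Rightarrow> nat \<Rightarrow> (nat \<Rightarrow> nat) \<Rightarrow> (nat \<Rightarrow> nat) \<Rightarrow> bool" where
  "mobile f a i j v1 v2 \<longleftrightarrow> f a v1 = i \<and> f a v2 = j \<and> i \<noteq> j"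

definition has_intermediate :: "nat \<Rightarrow> (nat \<Rightarrow> (nat \<Rightarrow> nat) \<Rightarrow> nat) \<Rightarrow> (nat \<Rightarrow> nat) \<Rightarrow> nat \<Rightarrow> nat \<Rightarrow> nat \<Rightarrow> bool" where
  "has_intermediate n f v s t i \<longleftrightarrow>
     switching_cost n f v (move v s t) = 2 \<and> i \<noteq> s \<and> i \<noteq> t \<and>
     (\<exists>a<n. mobile f a s i v (move v s t)) \<and> (\<exists>b<n. mobile f b i t v (move v s t))"

definition type1 :: "nat \<Rightarrow> nat \<Rightarrow> (nat \<Rightarrow> (nat \<Rightarrow> nat) \<Rightarrow> nat) \<Rightarrow> (nat \<Rightarrow> nat) \<Rightarrow> nat \<Rightarrow> bool" where
  "type1 n k f v t \<longleftrightarrow> t < k \<and>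
     (\<forall>s<k. s \<noteq> t \<and> v s \<ge> 1 \<longrightarrow> switching_cost n f v (move v s t) = 1)"

definition type2 :: "nat \<Rightarrow> nat \<Rightarrow> (nat \<Rightarrow> (nat \<Rightarrow> nat) \<Rightarrow> nat) \<Rightarrow> (nat \<Rightarrow> nat) \<Rightarrow> nat \<Rightarrow> nat \<Rightarrow> bool" where
  "type2 n k f v t i \<longleftrightarrow> t < k \<and> i < k \<and>
     (\<exists>a<n. \<forall>s<k. s \<noteq> i \<and> s \<noteq> t \<and> v s \<ge> 1 \<longrightarrow>
        has_intermediate n f v s t i \<and> mobile f a i t v (move v s t))"

end

theory Submission imports Defs begin

lemma move_apply: "move v s t j = (if j = t then v t + 1 else if j = s then v s - 1 else v j)"
  by (simp add: move_def)

lemma int_move: "s \<noteq> t \<Longrightarrow> v s \<ge> 1 \<Longrightarrow>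
  int (move v s t j) = int (v j) + (if j = t then 1 else 0) - (if j = s then 1 else 0)"
  by (auto simp: move_def)

lemma demand_move:
  assumes "demand_vec n k v" "s<k" "t<k" "s\<noteq>t" "v s \<ge> 1"
  shows "demand_vec n k (move v s t)"
proof -
  have "int (\<Sum>j<k. move v s t j) = (\<Sum>j<k. int (move v s t j))" by simp
  also have "\<dots> = (\<Sum>j<k. int (v j) + (if j = t then 1 else 0) - (if j = s then 1 else 0))"
    using assms by (simp add: int_move)
  also have "\<dots> = (\<Sum>j<k. int (v j))"
    using assms by (simp add: sum.distrib sum_subtractf)
  also have "\<dots> = int (\<Sum>j<k. v j)" by simp
  finally have "(\<Sum>j<k. move v s t j) = (\<Sum>j<k. v j)" by linarith
  then show ?thesis using assms unfolding demand_vec_def by (simp add: move_apply)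
qed

lemma adjacent_move:
  assumes "s<k" "t<k" "s\<noteq>t" "v s \<ge> 1"
  shows "adjacent k v (move v s t)"
proof -
  have "(\<Sum>j<k. \<bar>int (v j) - int (move v s t j)\<bar>) = (\<Sum>j<k. (if j = t then 1 else 0) + (if j = s then 1 else 0))"
    using assms by (intro sum.cong) (auto simp: int_move)
  also have "\<dots> = 2" using assms by (simp add: sum.distrib)
  finally show ?thesis unfolding adjacent_def .
qed

lemma cnt:
  assumes "satisfies_demand n k f" "demand_vec n k u"
  shows "card {a. a<n \<and> f a u = j} = u j"
proof (cases "j < k")
  case True then show ?thesis using assms unfolding satisfies_demand_def by blast
next
  case False
  have "\<forall>a<n. f a u < k" using assms unfolding satisfies_demand_def by blast
  then have "{a. a<n \<and> f a u = j} = {}" using False by auto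
  then show ?thesis using False assms(2) unfolding demand_vec_def by simp
qed

lemma card_filter_int: "finite D \<Longrightarrow> int (card {a\<in>D. P a}) = (\<Sum>a\<in>D. of_bool (P a))"
proof -
  assume "finite D"
  have "int (card {a\<in>D. P a}) = (\<Sum>a\<in>{a\<in>D. P a}. 1)" by simp
  also have "\<dots> = (\<Sum>a\<in>D. if P a then 1 else 0)" using \<open>finite D\<close> by (rule sum.inter_filter)
  finally show ?thesis by (simp add: of_bool_def)
qed

lemma diff_count:
  fixes F G :: "nat \<Rightarrow> nat"
  shows "int (card {a. a<n \<and> G a = j}) - int (card {a. a<n \<and> F a = j})
    = (\<Sum>a\<in>{a. a<n \<and> F a \<noteq> G a}. of_bool (G a = j) - of_bool (F a = j))"
proof -
  let ?D = "{a. a<n \<and> F a \<noteq> G a}"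
  let ?E = "{a. a<n \<and> F a = G a \<and> G a = j}"
  have g: "{a. a<n \<and> G a = j} = ?E \<union> {a\<in>?D. G a = j}" by auto
  have f: "{a. a<n \<and> F a = j} = ?E \<union> {a\<in>?D. F a = j}" by auto
  have "int (card {a. a<n \<and> G a = j}) = int (card ?E) + int (card {a\<in>?D. G a = j})"
    unfolding g by (subst card_Un_disjoint) auto
  moreover have "int (card {a. a<n \<and> F a = j}) = int (card ?E) + int (card {a\<in>?D. F a = j})"
    unfolding f by (subst card_Un_disjoint) auto
  moreover have "finite ?D" by simp
  ultimately show ?thesis using card_filter_int[of ?D "\<lambda>a. G a = j"] card_filter_int[of ?D "\<lambda>a. F a = j"]
    by (simp add: sum_subtractf)
qed

lemma struct2:
  fixes F G :: "nat \<Rightarrow> nat"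
  assumes "b \<noteq> c" "F b \<noteq> G b" "F c \<noteq> G c" "s \<noteq> t"
    and h: "\<And>j. (of_bool (G b = j) - of_bool (F b = j)) + (of_bool (G c = j) - of_bool (F c = j))
         = (of_bool (j = t) - of_bool (j = s) :: int)"
  shows "(F b = s \<and> G c = t \<and> G b = F c \<and> F c \<noteq> s \<and> F c \<noteq> t) \<or>
         (F c = s \<and> G b = t \<and> G c = F b \<and> F b \<noteq> s \<and> F b \<noteq> t)"
proof -
  have hs: "of_bool (G b = s) - of_bool (F b = s) + (of_bool (G c = s) - of_bool (F c = s)) = (-1::int)"
    using h[of s] assms(4) by simp
  have ht: "of_bool (G b = t) - of_bool (F b = t) + (of_bool (G c = t) - of_bool (F c = t)) = (1::int)"
    using h[of t] assms(4) by simp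
  show ?thesis
  proof (cases "F b = s")
    case True
    have Gb: "G b \<noteq> t"
    proof
      assume "G b = t"
      then show False using h[of "F c"] hs ht True assms(1-4) by (cases "F c = s"; cases "F c = t"; simp)
    qed
    have "G c = t" using ht True Gb assms by (cases "G c = t"; cases "F c = t"; simp)
    moreover have "F c = G b" using h[of "G b"] True Gb assms \<open>G c = t\<close> by (cases "G b = s"; cases "F c = G b"; simp)
    ultimately show ?thesis using True Gb assms by auto
  next
    case False
    then have Fc: "F c = s" using hs by (cases "G b = s"; cases "G c = s"; cases "F c = s"; simp)
    have Gc: "G c \<noteq> t"
    proof
      assume "G c = t"
      then show False using h[of "F b"] hs ht Fc False assms(1-4) by (cases "F b = s"; cases "F b = t"; simp)
    qed
    have "G b = t" using ht Fc Gc assms by (cases "G b = t"; cases "F b = t"; simp)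
    moreover have "F b = G c" using h[of "G c"] Fc Gc assms \<open>G b = t\<close> by (cases "G c = s"; cases "F b = G c"; simp)
    ultimately show ?thesis using Fc Gc assms by auto
  qed
qed

lemma count_eq:
  assumes sd: "satisfies_demand n k f" and dv: "demand_vec n k v"
    and "s<k" "t<k" "s\<noteq>t" "v s \<ge> 1"
  shows "(\<Sum>a\<in>{a. a<n \<and> f a v \<noteq> f a (move v s t)}. of_bool (f a (move v s t) = j) - of_bool (f a v = j))
     = (of_bool (j = t) - of_bool (j = s) :: int)"
proof -
  have dm: "demand_vec n k (move v s t)" using demand_move assms by blast
  have "int (move v s t j) - int (v j) = (of_bool (j = t) - of_bool (j = s) :: int)"
    using int_move[of s t v j] assms by simp
  then show ?thesis using diff_count[of n "\<lambda>a. f a (move v s t)" j "\<lambda>a. f a v"]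
      cnt[OF sd dv, of j] cnt[OF sd dm, of j] by simp
qed

lemma cost_nonzero:
  assumes sd: "satisfies_demand n k f" and dv: "demand_vec n k v"
    and "s<k" "t<k" "s\<noteq>t" "v s \<ge> 1"
  shows "switching_cost n f v (move v s t) \<noteq> 0"
proof
  assume "switching_cost n f v (move v s t) = 0"
  then have "{a. a<n \<and> f a v \<noteq> f a (move v s t)} = {}" unfolding switching_cost_def by simp
  then show False using count_eq[OF assms, of s] assms by simp
qed

lemma move_struct2:
  assumes sd: "satisfies_demand n k f" and dv: "demand_vec n k v"
    and "s<k" "t<k" "s\<noteq>t" "v s \<ge> 1"
    and D: "{a. a<n \<and> f a v \<noteq> f a (move v s t)} = {b,c}" and "b \<noteq> c"
  shows "(f b v = s \<and> f c (move v s t) = t \<and> f b (move v s t) = f c v \<and> f c v \<noteq> s \<and> f c v \<noteq> t) \<or>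
         (f c v = s \<and> f b (move v s t) = t \<and> f c (move v s t) = f b v \<and> f b v \<noteq> s \<and> f b v \<noteq> t)"
proof (rule struct2[where F="\<lambda>a. f a v" and G="\<lambda>a. f a (move v s t)", simplified])
  show "b \<noteq> c" by fact
  show "f b v \<noteq> f b (move v s t)" "f c v \<noteq> f c (move v s t)" using D by blast+
  show "s \<noteq> t" by fact
  fix j
  show "of_bool (f b (move v s t) = j) - of_bool (f b v = j) + (of_bool (f c (move v s t) = j) - of_bool (f c v = j))
         = (of_bool (j = t) - of_bool (j = s) :: int)"
    using count_eq[OF assms(1-6), of j] unfolding D using \<open>b\<noteq>c\<close> by simp
qed

lemma move_struct1:
  assumes sd: "satisfies_demand n k f" and dv: "demand_vec n k v"
    and "s<k" "t<k" "s\<noteq>t" "v s \<ge> 1"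
    and D: "{a. a<n \<and> f a v \<noteq> f a (move v s t)} = {y}"
  shows "f y v = s \<and> f y (move v s t) = t"
proof -
  have h: "\<And>j. of_bool (f y (move v s t) = j) - of_bool (f y v = j) = (of_bool (j = t) - of_bool (j = s) :: int)"
    using count_eq[OF assms(1-6)] unfolding D by simp
  show ?thesis using h[of s] h[of t] \<open>s\<noteq>t\<close>
    by (cases "f y v = s"; cases "f y (move v s t) = t"; cases "f y (move v s t) = s"; cases "f y v = t"; simp)
qed

theorem lemma4p4:
  fixes n k :: nat and f :: "nat \<Rightarrow> (nat \<Rightarrow> nat) \<Rightarrow> nat"
    and v :: "nat \<Rightarrow> nat" and t i :: nat
  assumes "n \<ge> 4" and "k \<ge> 5"
    and "satisfies_demand n k f"
    and "max_switching_cost_le n k f 2"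
    and "demand_vec n k v"
    and "card {j. j < k \<and> v j \<noteq> 0} \<ge> 4"
    and "type2 n k f v t i"
  shows "type1 n k f v i"
proof -
  note sd = assms(3) and dv = assms(5)
  have mx: "\<And>u u'. demand_vec n k u \<Longrightarrow> demand_vec n k u' \<Longrightarrow> adjacent k u u' \<Longrightarrow> switching_cost n f u u' \<le> 2"
    using assms(4) unfolding max_switching_cost_le_def by blast
  have tk: "t<k" and ik: "i<k" using assms(7) unfolding type2_def by auto
  obtain a where an: "a<n" and A: "\<And>s. s<k \<Longrightarrow> s\<noteq>i \<Longrightarrow> s\<noteq>t \<Longrightarrow> v s \<ge> 1 \<Longrightarrow>
      has_intermediate n f v s t i \<and> mobile f a i t v (move v s t)"
    using assms(7) unfolding type2_def by blast
  define S where "S = {s. s<k \<and> s\<noteq>i \<and> s\<noteq>t \<and> v s \<ge> 1}"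
  have SN: "S = {j. j < k \<and> v j \<noteq> 0} - {i,t}" unfolding S_def by auto
  have "card {j. j < k \<and> v j \<noteq> 0} - card {i,t} \<le> card S"
    unfolding SN by (rule diff_card_le_card_Diff) simp
  moreover have "card {i,t} \<le> 2" by (simp add: card_insert_if)
  ultimately have "2 \<le> card S" using assms(6) by linarith
  then obtain B where "B \<subseteq> S" "card B = 2" by (meson obtain_subset_with_card_n)
  then obtain s1 s2 where s1: "s1 \<in> S" and s2: "s2 \<in> S" and s12: "s1 \<noteq> s2"
    by (metis card_2_iff insert_subset)
  have ti: "t \<noteq> i" using A[of s1] s1 unfolding S_def mobile_def by auto
  have case1: "switching_cost n f v (move v s i) = 1" if sS: "s \<in> S" for s
  proof -
    have sk: "s<k" "s\<noteq>i" "s\<noteq>t" "v s\<ge>1" using sS by (auto simp: S_def)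
    define w where "w = move v s i"
    define C where "C = move v s t"
    have dw: "demand_vec n k w" unfolding w_def using demand_move[OF dv sk(1) ik sk(2) sk(4)] .
    have dC: "demand_vec n k C" unfolding C_def using demand_move[OF dv sk(1) tk sk(3) sk(4)] .
    have le2: "switching_cost n f v w \<le> 2"
      using mx[OF dv dw] adjacent_move[where v=v, OF sk(1) ik sk(2) sk(4)] unfolding w_def by blast
    have ne0: "switching_cost n f v w \<noteq> 0"
      using cost_nonzero[OF sd dv sk(1) ik sk(2) sk(4)] unfolding w_def .
    show ?thesis
    proof (rule ccontr)
      assume "switching_cost n f v (move v s i) \<noteq> 1"
      then have "card {a. a<n \<and> f a v \<noteq> f a w} = 2" using le2 ne0 unfolding switching_cost_def w_def by linarith
      then obtain b c where bc: "{a. a<n \<and> f a v \<noteq> f a w} = {b,c}" "b\<noteq>c" by (meson card_2_iff)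
      have disj: "(f b v = s \<and> f c w = i \<and> f b w = f c v \<and> f c v \<noteq> s \<and> f c v \<noteq> i) \<or>
         (f c v = s \<and> f b w = i \<and> f c w = f b v \<and> f b v \<noteq> s \<and> f b v \<noteq> i)"
        using move_struct2[OF sd dv sk(1) ik sk(2) sk(4) bc[unfolded w_def]] unfolding w_def .
      obtain b' c' where st: "{a. a<n \<and> f a v \<noteq> f a w} = {b',c'}" "b'\<noteq>c'" "f b' v = s" "f c' w = i"
          "f b' w = f c' v" "f c' v \<noteq> s" "f c' v \<noteq> i"
      proof (cases "f b v = s \<and> f c w = i \<and> f b w = f c v \<and> f c v \<noteq> s \<and> f c v \<noteq> i")
        case True then show ?thesis using that bc by blast
      next
        case False then have "f c v = s \<and> f b w = i \<and> f c w = f b v \<and> f b v \<noteq> s \<and> f b v \<noteq> i" using disj by blast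
        then show ?thesis using that[of c b] bc by (simp add: insert_commute)
      qed
      have hi: "has_intermediate n f v s t i" and ma: "mobile f a i t v C"
        using A[OF sk(1) sk(2) sk(3) sk(4)] unfolding C_def by auto
      obtain x where xn: "x<n" and mx': "mobile f x s i v C" and c2: "switching_cost n f v C = 2"
        using hi unfolding has_intermediate_def C_def by blast
      have fa: "f a v = i" "f a C = t" using ma unfolding mobile_def by auto
      have fx: "f x v = s" "f x C = i" using mx' unfolding mobile_def by auto
      have ax: "a \<noteq> x" using fa fx sk by auto
      have sub: "{a,x} \<subseteq> {z. z<n \<and> f z v \<noteq> f z C}" using an xn fa fx ti sk by auto
      have DC: "{z. z<n \<and> f z v \<noteq> f z C} = {a,x}"
        by (rule card_subset_eq[symmetric]) (use sub c2 ax in \<open>simp_all add: switching_cost_def\<close>)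
      have agree: "f z C = f z v" if "z<n" "z\<noteq>a" "z\<noteq>x" for z
      proof -
        have "z \<notin> {z. z<n \<and> f z v \<noteq> f z C}" unfolding DC using that by simp
        then show ?thesis using that by simp
      qed
      have "b' \<in> {a. a<n \<and> f a v \<noteq> f a w}" "c' \<in> {a. a<n \<and> f a v \<noteq> f a w}"
        unfolding st(1) by simp_all
      then have bn: "b'<n" "c'<n" by simp_all
      have ab: "a \<noteq> b'" using fa(1) st(3) sk(2) by auto
      have ac: "a \<noteq> c'" using fa(1) st(7) by auto
      have "a \<notin> {a. a<n \<and> f a v \<noteq> f a w}" unfolding st(1) using ab ac by simp
      then have faw: "f a w = i" using an fa(1) by simp
      have c'x: "c' \<noteq> x" using fx(1) st(6) by auto
      have c'C: "f c' C = f c' v" using agree[OF bn(2) ac[symmetric] c'x] .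
      have b'C: "f b' C \<noteq> f b' w"
      proof (cases "b' = x")
        case True then show ?thesis using fx st by auto
      next
        case False
        have "f b' C = s" using agree[OF bn(1) ab[symmetric] False] st(3) by simp
        then show ?thesis using st(5) st(6) by simp
      qed
      have Cw: "C = move w i t" unfolding C_def w_def move_def using sk ti by (auto simp: fun_eq_iff)
      have wi: "w i \<ge> 1" unfolding w_def move_def by simp
      have "switching_cost n f w C \<le> 2"
        using mx[OF dw dC] adjacent_move[where v=w, OF ik tk ti[symmetric] wi] Cw by simp
      moreover have "{a,b',c'} \<subseteq> {z. z<n \<and> f z w \<noteq> f z C}"
      proof -
        have "f a w \<noteq> f a C" using faw fa(2) ti by simp
        moreover have "f c' w \<noteq> f c' C" using c'C st(4) st(7) by simp
        ultimately show ?thesis using an bn b'C by auto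
      qed
      moreover have "card {a,b',c'} = 3" using ab ac st(2) by simp
      moreover have "card {a,b',c'} \<le> card {z. z<n \<and> f z w \<noteq> f z C}"
        by (rule card_mono) (simp, fact)
      ultimately show False unfolding switching_cost_def by linarith
    qed
  qed
  show ?thesis unfolding type1_def
  proof (intro conjI allI impI)
    show "i<k" by fact
    fix s assume s0: "s < k" and s1': "s \<noteq> i \<and> 1 \<le> v s"
    have s: "s < k \<and> s \<noteq> i \<and> 1 \<le> v s" using s0 s1' by simp
    show "switching_cost n f v (move v s i) = 1"
    proof (cases "s = t")
      case False then show ?thesis using case1 s unfolding S_def by auto
    next
      case True
      have vt: "v t \<ge> 1" using s True by simp
      define w where "w = move v t i"
      have dw: "demand_vec n k w" unfolding w_def using demand_move[OF dv tk ik ti vt] .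
      have le2: "switching_cost n f v w \<le> 2"
        using mx[OF dv dw] adjacent_move[where v=v, OF tk ik ti vt] unfolding w_def by blast
      have ne0: "switching_cost n f v w \<noteq> 0"
        using cost_nonzero[OF sd dv tk ik ti vt] unfolding w_def .
      show ?thesis unfolding True
      proof (rule ccontr)
        assume "switching_cost n f v (move v t i) \<noteq> 1"
        then have "card {a. a<n \<and> f a v \<noteq> f a w} = 2" using le2 ne0 unfolding switching_cost_def w_def by linarith
        then obtain b c where bc: "{a. a<n \<and> f a v \<noteq> f a w} = {b,c}" "b\<noteq>c" by (meson card_2_iff)
        have disj: "(f b v = t \<and> f c w = i \<and> f b w = f c v \<and> f c v \<noteq> t \<and> f c v \<noteq> i) \<or>
           (f c v = t \<and> f b w = i \<and> f c w = f b v \<and> f b v \<noteq> t \<and> f b v \<noteq> i)"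
          using move_struct2[OF sd dv tk ik ti vt bc[unfolded w_def]] unfolding w_def .
        obtain b' c' where st: "{a. a<n \<and> f a v \<noteq> f a w} = {b',c'}" "b'\<noteq>c'" "f b' v = t" "f c' w = i"
            "f b' w = f c' v" "f c' v \<noteq> t" "f c' v \<noteq> i"
        proof (cases "f b v = t \<and> f c w = i \<and> f b w = f c v \<and> f c v \<noteq> t \<and> f c v \<noteq> i")
          case True then show ?thesis using that bc by blast
        next
          case False then have "f c v = t \<and> f b w = i \<and> f c w = f b v \<and> f b v \<noteq> t \<and> f b v \<noteq> i" using disj by blast
          then show ?thesis using that[of c b] bc by (simp add: insert_commute)
        qed
        have "b' \<in> {a. a<n \<and> f a v \<noteq> f a w}" "c' \<in> {a. a<n \<and> f a v \<noteq> f a w}"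
          unfolding st(1) by simp_all
        then have bn: "b'<n" "c'<n" by simp_all
        have eq: "f c' v = s'" if s'S: "s' \<in> S" for s'
        proof -
          have sk: "s'<k" "s'\<noteq>i" "s'\<noteq>t" "v s'\<ge>1" using s'S by (auto simp: S_def)
          define P where "P = move v s' i"
          have dP: "demand_vec n k P" unfolding P_def using demand_move[OF dv sk(1) ik sk(2) sk(4)] .
          have "card {a. a<n \<and> f a v \<noteq> f a P} = 1" using case1[OF s'S] unfolding P_def switching_cost_def .
          then obtain y where y: "{a. a<n \<and> f a v \<noteq> f a P} = {y}" by (meson card_1_singletonE)
          have fy: "f y v = s'" "f y P = i" using move_struct1[OF sd dv sk(1) ik sk(2) sk(4) y[unfolded P_def]]
            unfolding P_def by auto
          have "y \<in> {a. a<n \<and> f a v \<noteq> f a P}" unfolding y by simp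
          then have yn: "y < n" by simp
          have agree: "f z P = f z v" if "z<n" "z\<noteq>y" for z
          proof -
            have "z \<notin> {a. a<n \<and> f a v \<noteq> f a P}" unfolding y using that by simp
            then show ?thesis using that by simp
          qed
          have wP: "w = move P t s'" unfolding P_def w_def move_def using sk ti by (auto simp: fun_eq_iff)
          have Pt: "P t \<ge> 1" unfolding P_def move_def using sk vt ti by simp
          have le: "switching_cost n f P w \<le> 2"
            using mx[OF dP dw] adjacent_move[where v=P, OF tk sk(1) sk(3)[symmetric] Pt] wP by simp
          show ?thesis
          proof (rule ccontr)
            assume ne: "f c' v \<noteq> s'"
            have yc: "y \<noteq> c'" using ne fy by auto
            have yb: "y \<noteq> b'" using fy st sk by auto
            have "y \<notin> {a. a<n \<and> f a v \<noteq> f a w}" unfolding st(1) using yc yb by simp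
            then have fyw: "f y w = s'" using yn fy(1) by simp
            have "f b' P \<noteq> f b' w" using agree[OF bn(1) yb[symmetric]] st(3) st(5) st(6) by simp
            moreover have "f y P \<noteq> f y w" using fy(2) fyw sk(2) by simp
            moreover have "f c' P \<noteq> f c' w" using agree[OF bn(2) yc[symmetric]] st(4) st(7) by simp
            ultimately have "{b',y,c'} \<subseteq> {z. z<n \<and> f z P \<noteq> f z w}"
              using bn yn by auto
            moreover have "card {b',y,c'} = 3" using yc yb st(2) by auto
            moreover have "card {b',y,c'} \<le> card {z. z<n \<and> f z P \<noteq> f z w}"
              by (rule card_mono) (simp, fact)
            ultimately show False using le unfolding switching_cost_def by linarith
          qed
        qed
        show False using eq[OF s1] eq[OF s2] s12 by simp
      qed
    qed
  qed
qed

end
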